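(* Let $(N,v)$ be a balanced game. Every coalition that is minimal with respect to inclusion in $\mathscr{E}(N,v)$ is strictly vital-exact.
   Context: A game $(N,v)$: $N$ finite nonempty, $v:2^N\to\mathbb{R}$, $v(\varnothing)=0$; $x(S)=\sum_{i\in S}x_i$. Core: $C(N,v)=\{x\in\mathbb{R}^N\mid x(N)=v(N),\ x(S)\ge v(S)\ \forall S\subseteq N\}$; the game is balanced if $C(N,v)\ne\varnothing$. A coalition (nonempty $S\subseteq N$) is effective if $x(S)=v(S)$ for all $x\in C(N,v)$; $\mathscr{E}(N,v)$ is the set of effective coalitions. A coalition $S$ is strictly vital-exact if there exists $x\in C(N,v)$ with $x(S)=v(S)$ and $x(T)>v(T)$ for all $T\in 2^S\setminus\{\varnothing,S\}$. *)

theory Defs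
  imports Complex_Main "HOL-Library.FuncSet"
begin

text \<open>A TU game (N,v): N finite nonempty player set, v a function on coalitions with
v {} = 0. Payoff vectors in R^N are represented as real functions on N
(extensional: value 0 outside N).\<close>

definition game :: "'a set \<Rightarrow> ('a set \<Rightarrow> real) \<Rightarrow> bool" where
  "game N v \<longleftrightarrow> finite N \<and> N \<noteq> {} \<and> v {} = 0"

definition core :: "'a set \<Rightarrow> ('a set \<Rightarrow> real) \<Rightarrow> ('a \<Rightarrow> real) set" where
  "core N v = {x \<in> extensional N. sum x N = v N \<and> (\<forall>S. S \<subseteq> N \<longrightarrow> sum x S \<ge> v S)}"

definition balanced :: "'a set \<Rightarrow> ('a set \<Rightarrow> real) \<Rightarrow> bool" where
  "balanced N v \<longleftrightarrow> core N v \<noteq> {}"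

definition effective_coalitions :: "'a set \<Rightarrow> ('a set \<Rightarrow> real) \<Rightarrow> 'a set set" where
  "effective_coalitions N v =
     {S. S \<subseteq> N \<and> S \<noteq> {} \<and> (\<forall>x \<in> core N v. sum x S = v S)}"

definition strictly_vital_exact :: "'a set \<Rightarrow> ('a set \<Rightarrow> real) \<Rightarrow> 'a set \<Rightarrow> bool" where
  "strictly_vital_exact N v S \<longleftrightarrow>
     (\<exists>x \<in> core N v. sum x S = v S \<and>
        (\<forall>T. T \<subseteq> S \<and> T \<noteq> {} \<and> T \<noteq> S \<longrightarrow> sum x T > v T))"

end

theory Submission
  imports Defs
begin

theorem mainTheorem8:
  fixes N :: "'a set" and v :: "'a set \<Rightarrow> real" and S :: "'a set"
  assumes "game N v"
    and "balanced N v"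
    and "S \<in> effective_coalitions N v"
    and "\<forall>T \<in> effective_coalitions N v. T \<subseteq> S \<longrightarrow> T = S"
  shows "strictly_vital_exact N v S"
proof -
  have fN: "finite N" using assms(1) by (simp add: game_def)
  have SN: "S \<subseteq> N" and Seff: "\<forall>x \<in> core N v. sum x S = v S"
    using assms(3) by (auto simp: effective_coalitions_def)
  obtain x0 where x0: "x0 \<in> core N v" using assms(2) by (auto simp: balanced_def)
  define P where "P = {T. T \<subseteq> S \<and> T \<noteq> {} \<and> T \<noteq> S}"
  have fS: "finite S" using finite_subset[OF SN fN] .
  have "P \<subseteq> Pow S" unfolding P_def by blast
  hence fP: "finite P" using fS finite_subset by blast
  have ex: "\<exists>y \<in> core N v. sum y T > v T" if "T \<in> P" for T
  proof (rule ccontr)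
    assume neg: "\<not> ?thesis"
    have "\<forall>y \<in> core N v. sum y T = v T"
    proof
      fix y assume y: "y \<in> core N v"
      have "T \<subseteq> N" using that SN by (auto simp: P_def)
      hence "sum y T \<ge> v T" using y by (simp add: core_def)
      moreover have "\<not> sum y T > v T" using neg y by blast
      ultimately show "sum y T = v T" by linarith
    qed
    hence "T \<in> effective_coalitions N v" using that SN
      by (auto simp: effective_coalitions_def P_def)
    thus False using assms(4) that by (auto simp: P_def)
  qed
  define f where "f T = (SOME y. y \<in> core N v \<and> sum y T > v T)" for T
  have f: "f T \<in> core N v \<and> sum (f T) T > v T" if "T \<in> P" for T
    using someI_ex[OF ex[OF that, unfolded Bex_def]] by (simp add: f_def)
  define c where "c = real (card P) + 1"
  have cpos: "c > 0" by (simp add: c_def)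
  define x where "x i = (if i \<in> N then (x0 i + (\<Sum>T\<in>P. f T i)) / c else undefined)" for i
  have sx: "sum x A = (sum x0 A + (\<Sum>T\<in>P. sum (f T) A)) / c" if AN: "A \<subseteq> N" for A
  proof -
    have "sum x A = (\<Sum>i\<in>A. (x0 i + (\<Sum>T\<in>P. f T i)) / c)"
      by (rule sum.cong) (use AN in \<open>auto simp: x_def\<close>)
    also have "\<dots> = (sum x0 A + (\<Sum>T\<in>P. sum (f T) A)) / c"
      by (simp add: sum_divide_distrib[symmetric] sum.distrib sum.swap[of _ P])
    finally show ?thesis .
  qed
  have ge: "(\<Sum>T\<in>P. sum (f T) A) \<ge> real (card P) * v A" if "A \<subseteq> N" for A
  proof -
    have "(\<Sum>T\<in>P. sum (f T) A) \<ge> (\<Sum>T\<in>P. v A)"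
      by (rule sum_mono) (use f that in \<open>auto simp: core_def\<close>)
    thus ?thesis by simp
  qed
  have x0ge: "sum x0 A \<ge> v A" if "A \<subseteq> N" for A using x0 that by (auto simp: core_def)
  have core_x: "x \<in> core N v"
  proof -
    have "x \<in> extensional N" by (simp add: x_def extensional_def)
    moreover have "sum x N = v N"
    proof -
      have "(\<Sum>T\<in>P. sum (f T) N) = (\<Sum>T\<in>P. v N)"
        by (rule sum.cong) (use f in \<open>auto simp: core_def\<close>)
      moreover have "sum x0 N = v N" using x0 by (auto simp: core_def)
      ultimately show ?thesis using cpos by (simp add: sx[OF order_refl] c_def field_simps)
    qed
    moreover have "sum x A \<ge> v A" if "A \<subseteq> N" for A
    proof -
      have "sum x0 A + (\<Sum>T\<in>P. sum (f T) A) \<ge> c * v A"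
        using ge[OF that] x0ge[OF that] by (simp add: c_def algebra_simps)
      thus ?thesis using cpos by (simp add: sx[OF that] pos_le_divide_eq mult.commute)
    qed
    ultimately show ?thesis by (auto simp: core_def)
  qed
  have strict: "sum x T > v T" if "T \<in> P" for T
  proof -
    have TN: "T \<subseteq> N" using that SN by (auto simp: P_def)
    have "(\<Sum>T'\<in>P. sum (f T') T) > (\<Sum>T'\<in>P. v T)"
      by (rule sum_strict_mono_ex1[OF fP]) (use f TN that in \<open>auto simp: core_def\<close>)
    hence "(\<Sum>T'\<in>P. sum (f T') T) > real (card P) * v T" by simp
    hence "sum x0 T + (\<Sum>T'\<in>P. sum (f T') T) > c * v T"
      using x0ge[OF TN] by (simp add: c_def algebra_simps)
    thus ?thesis using cpos by (simp add: sx[OF TN] pos_less_divide_eq mult.commute)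
  qed
  show ?thesis unfolding strictly_vital_exact_def
    using core_x Seff strict by (auto simp: P_def)
qed

end
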